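(* Let $(X,d)$ be a complete metric space. Let $F:(0,\infty)\to\mathbb{R}$ be nondecreasing and let $\varphi:(0,\infty)\to(0,\infty)$ satisfy: $(iii')$ for every $t>0$ and every sequence $(t_n)\subset(t,\infty)$ with $t_n\to t$, $\limsup_{n\to\infty}\varphi(t_n)>0$. If $T:X\to X$ satisfies, for all $x,y\in X$ with $Tx\neq Ty$, $$\varphi(d(x,y))+F(d(Tx,Ty))\le F(d(x,y)),$$ then $T$ is a Picard operator.
   Context: $T$ is a Picard operator if $T$ has a unique fixed point $u\in X$ and for every $x\in X$ the sequence $(T^nx)_{n\in\mathbb{N}}$ converges to $u$. *)

theory Defs
  imports "HOL-Analysis.Analysis"
begin

definition picard_operator :: "('a::metric_space \<Rightarrow> 'a) \<Rightarrow> bool" where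
  "picard_operator T \<longleftrightarrow>
     (\<exists>u. T u = u \<and> (\<forall>v. T v = v \<longrightarrow> v = u) \<and>
          (\<forall>x. (\<lambda>n. (T ^^ n) x) \<longlonglongrightarrow> u))"

end

theory Submission imports Defs begin

lemma lemB:
  fixes F \<phi> :: "real \<Rightarrow> real" and e :: real
  assumes F_mono: "mono_on {0<..} F"
    and \<phi>_pos: "\<And>t. t > 0 \<Longrightarrow> \<phi> t > 0"
    and \<phi>_iii': "\<And>t s. t > 0 \<Longrightarrow> (\<forall>n. s n > t) \<Longrightarrow> s \<longlonglongrightarrow> t \<Longrightarrow>
                   limsup (\<lambda>n. ereal (\<phi> (s n))) > 0"
    and e: "e > 0"
    and H: "\<And>\<delta>. \<delta> > 0 \<Longrightarrow> \<exists>s r. e < r \<and> r < s \<and> s < e + \<delta> \<and> \<phi> s \<le> F s - F r"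
  shows False
proof -
  have "\<forall>\<delta>. \<exists>q. \<delta> > 0 \<longrightarrow> e < snd q \<and> snd q < fst q \<and> fst q < e + \<delta> \<and> \<phi> (fst q) \<le> F (fst q) - F (snd q)"
    using H by fastforce
  then obtain g where g: "\<And>\<delta>. \<delta> > 0 \<Longrightarrow> e < snd (g \<delta>) \<and> snd (g \<delta>) < fst (g \<delta>) \<and> fst (g \<delta>) < e + \<delta> \<and> \<phi> (fst (g \<delta>)) \<le> F (fst (g \<delta>)) - F (snd (g \<delta>))"
    by metis
  define p where "p = rec_nat (g 1) (\<lambda>k q. g (min (1 / (real k + 2)) (snd q - e)))"
  have p0: "p 0 = g 1" by (simp add: p_def)
  have pS: "p (Suc k) = g (min (1 / (real k + 2)) (snd (p k) - e))" for k by (simp add: p_def)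
  have P: "e < snd (p k) \<and> snd (p k) < fst (p k) \<and> fst (p k) < e + 1 / (real k + 1) \<and> \<phi> (fst (p k)) \<le> F (fst (p k)) - F (snd (p k))" for k
  proof (induction k)
    case 0
    then show ?case using g[of 1] p0 by simp
  next
    case (Suc k)
    let ?d = "min (1 / (real k + 2)) (snd (p k) - e)"
    have d: "?d > 0" using Suc by simp
    have "?d \<le> 1 / (real (Suc k) + 1)" by (simp add: add.commute)
    then show ?case using g[OF d] pS[of k] by fastforce
  qed
  have step: "fst (p (Suc k)) < snd (p k)" for k
  proof -
    let ?d = "min (1 / (real k + 2)) (snd (p k) - e)"
    have d: "?d > 0" using P[of k] by simp
    show ?thesis using g[OF d] pS[of k] by fastforce
  qed
  define s where "s k = fst (p k)" for k
  have spos: "s k > e" for k using P[of k] unfolding s_def by linarith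
  have Fs: "\<phi> (s k) \<le> F (s k) - F (s (Suc k))" for k
  proof -
    have "F (s (Suc k)) \<le> F (snd (p k))"
      using F_mono step[of k] spos[of "Suc k"] e unfolding s_def
      by (intro mono_onD[OF F_mono]) auto
    then show ?thesis using P[of k] unfolding s_def by linarith
  qed
  have sumle: "(\<Sum>k<N. \<phi> (s k)) \<le> F (s 0) - F (s N)" for N
  proof (induction N)
    case 0 then show ?case by simp
  next
    case (Suc N) then show ?case using Fs[of N] by simp
  qed
  have FN: "F e \<le> F (s N)" for N
    using spos[of N] e by (intro mono_onD[OF F_mono]) auto
  have summ: "summable (\<lambda>k. \<phi> (s k))"
  proof (rule summableI_nonneg_bounded)
    show "0 \<le> \<phi> (s n)" for n using \<phi>_pos[of "s n"] spos[of n] e by simp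
    show "(\<Sum>k<n. \<phi> (s k)) \<le> F (s 0) - F e" for n using sumle[of n] FN[of n] by linarith
  qed
  hence "(\<lambda>k. \<phi> (s k)) \<longlonglongrightarrow> 0" by (rule summable_LIMSEQ_zero)
  hence "(\<lambda>k. ereal (\<phi> (s k))) \<longlonglongrightarrow> ereal 0" by (rule tendsto_ereal)
  hence lim0: "limsup (\<lambda>k. ereal (\<phi> (s k))) = ereal 0"
    by (rule lim_imp_Limsup[OF trivial_limit_sequentially])
  have lim1: "(\<lambda>k. e + inverse (real (Suc k))) \<longlonglongrightarrow> e"
    using tendsto_add[OF tendsto_const LIMSEQ_inverse_real_of_nat, of e] by simp
  have ev1: "\<forall>\<^sub>F n in sequentially. e \<le> s n" using spos by (simp add: less_imp_le)
  have le2: "s n \<le> e + inverse (real (Suc n))" for n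
  proof -
    have "s n < e + 1 / (real n + 1)" using P[of n] unfolding s_def by blast
    also have "1 / (real n + 1) = inverse (real (Suc n))" by (simp add: inverse_eq_divide add.commute)
    finally show ?thesis by linarith
  qed
  have slim: "s \<longlonglongrightarrow> e"
    by (rule tendsto_sandwich[OF ev1 _ tendsto_const lim1]) (intro always_eventually allI le2)
  have "\<forall>n. s n > e" using spos by blast
  from \<phi>_iii'[OF e this slim] have "limsup (\<lambda>n. ereal (\<phi> (s n))) > 0" .
  with lim0 show False by (metis less_irrefl zero_ereal_def)
qed

theorem mainTheorem5:
  fixes T :: "'a::complete_space \<Rightarrow> 'a"
    and F :: "real \<Rightarrow> real"
    and \<phi> :: "real \<Rightarrow> real"
  assumes F_mono: "mono_on {0<..} F"
    and \<phi>_pos: "\<And>t. t > 0 \<Longrightarrow> \<phi> t > 0"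
    and \<phi>_iii': "\<And>t s. t > 0 \<Longrightarrow> (\<forall>n. s n > t) \<Longrightarrow> s \<longlonglongrightarrow> t \<Longrightarrow>
                   limsup (\<lambda>n. ereal (\<phi> (s n))) > 0"
    and contr: "\<And>x y. T x \<noteq> T y \<Longrightarrow>
                   \<phi> (dist x y) + F (dist (T x) (T y)) \<le> F (dist x y)"
  shows "picard_operator T"
proof -
  have keyF: "\<phi> (dist x y) \<le> F (dist x y) - F (dist (T x) (T y))" if "T x \<noteq> T y" for x y
    using contr[OF that] by linarith
  have lt: "dist (T x) (T y) < dist x y" if "T x \<noteq> T y" for x y
  proof (rule ccontr)
    assume "\<not> ?thesis"
    hence le: "dist x y \<le> dist (T x) (T y)" by simp
    have "x \<noteq> y" using that by blast
    hence p: "dist x y > 0" by simp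
    hence "F (dist x y) \<le> F (dist (T x) (T y))" using le
      by (intro mono_onD[OF F_mono]) auto
    moreover have "\<phi> (dist x y) > 0" using \<phi>_pos p by blast
    ultimately show False using keyF[OF that] by linarith
  qed
  have le: "dist (T x) (T y) \<le> dist x y" for x y
    using lt[of x y] by (cases "T x = T y") auto
  have orbit: "\<exists>u. T u = u \<and> (\<lambda>n. (T ^^ n) x0) \<longlonglongrightarrow> u" for x0
  proof -
    define xs where "xs n = (T ^^ n) x0" for n
    have xsS: "xs (Suc n) = T (xs n)" for n by (simp add: xs_def)
    define d where "d n = dist (xs n) (xs (Suc n))" for n
    have dmono: "antimono_on UNIV d"
    proof (rule antimonoI)
      fix m n :: nat assume "m \<le> n"
      thus "d n \<le> d m"
      proof (induction n)
        case 0 thus ?case by simp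
      next
        case (Suc n)
        have "d (Suc n) \<le> d n" unfolding d_def using le[of "xs n" "xs (Suc n)"] by (simp add: xsS)
        thus ?case using Suc by (cases "m = Suc n") auto
      qed
    qed
    obtain L where dL: "d \<longlonglongrightarrow> L" and Lle: "\<forall>i. L \<le> d i"
      using decseq_convergent[OF dmono, of 0] by (auto simp: d_def)
    have d0: "d \<longlonglongrightarrow> 0"
    proof (cases "L > 0")
      case False
      have "0 \<le> L" by (rule LIMSEQ_le_const[OF dL]) (auto simp: d_def)
      with False have "L = 0" by simp
      with dL show ?thesis by simp
    next
      case True
      show ?thesis
      proof (rule lemB[OF F_mono \<phi>_pos \<phi>_iii' True, THEN FalseE])
        fix \<delta> :: real assume "\<delta> > 0"
        from LIMSEQ_D[OF dL this] obtain n0 where n0: "\<forall>n\<ge>n0. norm (d n - L) < \<delta>" by blast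
        have dn: "d n0 < L + \<delta>" using n0 by auto
        have ne: "xs n \<noteq> xs (Suc n)" for n
        proof
          assume "xs n = xs (Suc n)"
          hence "d n = 0" by (simp add: d_def)
          moreover have "L \<le> d n" using Lle by blast
          ultimately show False using True by simp
        qed
        have dlt: "d (Suc n) < d n" for n
          unfolding d_def using lt[of "xs n" "xs (Suc n)"] ne[of "Suc n"] by (simp add: xsS)
        have r: "L < d (Suc n0)" using dlt[of "Suc n0"] Lle[rule_format, of "Suc (Suc n0)"] by linarith
        have "\<phi> (d n0) \<le> F (d n0) - F (d (Suc n0))"
          unfolding d_def using keyF[of "xs n0" "xs (Suc n0)"] ne[of "Suc n0"] by (simp add: xsS)
        thus "\<exists>s r. L < r \<and> r < s \<and> s < L + \<delta> \<and> \<phi> s \<le> F s - F r"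
          using r dlt[of n0] dn by blast
      qed
    qed
    have cau: "Cauchy xs"
    proof (rule ccontr)
      assume "\<not> Cauchy xs"
      hence "\<not> (\<forall>e>0. \<exists>M. \<forall>m\<ge>M. \<forall>n\<ge>M. dist (xs m) (xs n) < e)"
        using metric_CauchyI[of xs] by blast
      then obtain e where e: "e > 0" and E0: "\<forall>M. \<exists>m\<ge>M. \<exists>n\<ge>M. \<not> dist (xs m) (xs n) < e"
        by blast
      have E: "\<exists>m\<ge>M. \<exists>n\<ge>M. e \<le> dist (xs m) (xs n)" for M
        using E0 by (meson not_less)
      define \<epsilon> where "\<epsilon> = e / 2"
      have \<epsilon>: "\<epsilon> > 0" "\<epsilon> < e" using e by (auto simp: \<epsilon>_def)
      show False
      proof (rule lemB[OF F_mono \<phi>_pos \<phi>_iii' \<epsilon>(1)])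
        fix \<delta> :: real assume \<delta>: "\<delta> > 0"
        hence "\<delta> / 3 > 0" by simp
        from LIMSEQ_D[OF d0 this] obtain K where K0: "\<forall>k\<ge>K. norm (d k - 0) < \<delta> / 3"
          by blast
        have K: "d k < \<delta> / 3" if "k \<ge> K" for k using K0 that by fastforce
        obtain m n where mn: "m \<ge> Suc K" "n \<ge> Suc K" "e \<le> dist (xs m) (xs n)" using E[of "Suc K"] by blast
        have "\<exists>n m. Suc K \<le> n \<and> n < m \<and> \<epsilon> < dist (xs n) (xs m)"
        proof (cases "n < m")
          case True thus ?thesis using mn \<epsilon> by (intro exI[of _ n] exI[of _ m]) (auto simp: dist_commute)
        next
          case False
          hence "m < n \<or> m = n" by auto
          thus ?thesis
          proof
            assume "m < n" thus ?thesis using mn \<epsilon> by (intro exI[of _ m] exI[of _ n]) (auto simp: dist_commute)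
          next
            assume "m = n" thus ?thesis using mn e by simp
          qed
        qed
        then obtain n m where nm: "Suc K \<le> n" "n < m" "\<epsilon> < dist (xs n) (xs m)" by blast
        obtain n0 where n0: "n = Suc n0" using nm(1) by (cases n) auto
        obtain m0 where m0: "m = Suc m0" using nm(2) by (cases m) auto
        define P where "P j \<longleftrightarrow> n0 \<le> j \<and> \<epsilon> < dist (xs (Suc n0)) (xs (Suc j))" for j
        have Pm: "P m0" using nm n0 m0 by (simp add: P_def)
        define j where "j = (LEAST j. P j)"
        have Pj: "P j" unfolding j_def by (rule LeastI[of P, OF Pm])
        have "j \<noteq> n0" using Pj \<epsilon> by (auto simp: P_def)
        with Pj obtain j' where j': "j = Suc j'" "n0 \<le> j'" unfolding P_def
          by (cases j) auto
        have "\<not> P j'" using not_less_Least[of j' P] j' unfolding j_def[symmetric] by simp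
        hence mid: "dist (xs (Suc n0)) (xs (Suc j')) \<le> \<epsilon>" using j' by (simp add: P_def)
        define a where "a = xs n0"
        define b where "b = xs (Suc j')"
        have Ta: "T a = xs (Suc n0)" and Tb: "T b = xs (Suc j)" by (simp_all add: a_def b_def xsS j')
        have r: "\<epsilon> < dist (T a) (T b)" using Pj by (simp add: P_def Ta Tb)
        hence neq: "T a \<noteq> T b" using \<epsilon> by auto
        have d1: "dist a (xs (Suc n0)) < \<delta>/3" using K[of n0] nm n0 by (simp add: a_def d_def)
        have "dist a b \<le> dist a (xs (Suc n0)) + dist (xs (Suc n0)) (xs (Suc j'))"
          unfolding b_def by (rule dist_triangle)
        hence s: "dist a b < \<epsilon> + \<delta>" using d1 mid \<delta> by linarith
        show "\<exists>s r. \<epsilon> < r \<and> r < s \<and> s < \<epsilon> + \<delta> \<and> \<phi> s \<le> F s - F r"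
          using r lt[OF neq] s keyF[OF neq] by blast
      qed
    qed
    then obtain u where u: "xs \<longlonglongrightarrow> u" using Cauchy_convergent_iff convergent_def by blast
    have "(\<lambda>n. dist (T (xs n)) (T u)) \<longlonglongrightarrow> 0"
    proof (rule tendsto_sandwich[where f="\<lambda>_. 0" and h="\<lambda>n. dist (xs n) u"])
      show "\<forall>\<^sub>F n in sequentially. 0 \<le> dist (T (xs n)) (T u)" by simp
      show "\<forall>\<^sub>F n in sequentially. dist (T (xs n)) (T u) \<le> dist (xs n) u" using le by simp
      show "(\<lambda>n. dist (xs n) u) \<longlonglongrightarrow> 0" using u tendsto_dist_iff by blast
    qed simp
    hence "(\<lambda>n. T (xs n)) \<longlonglongrightarrow> T u" using tendsto_dist_iff by blast
    moreover have "(\<lambda>n. T (xs n)) \<longlonglongrightarrow> u" using LIMSEQ_Suc[OF u] by (simp add: xsS)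
    ultimately have "T u = u" by (rule LIMSEQ_unique)
    thus ?thesis using u unfolding xs_def by blast
  qed
  have uniq: "v = u" if tu: "T u = u" and tv: "T v = v" for u v
  proof (rule ccontr)
    assume uv: "v \<noteq> u"
    hence ne: "T u \<noteq> T v" using tu tv by metis
    have "\<phi> (dist u v) + F (dist (T u) (T v)) \<le> F (dist u v)" by (rule contr[OF ne])
    hence "\<phi> (dist u v) \<le> 0" unfolding tu tv by linarith
    moreover have "dist u v > 0" using uv by simp
    ultimately show False using \<phi>_pos[of "dist u v"] by linarith
  qed
  obtain u where u: "T u = u" using orbit by blast
  show ?thesis unfolding picard_operator_def
  proof (intro exI[of _ u] conjI allI impI)
    show "T u = u" by fact
    show "v = u" if "T v = v" for v using uniq[OF u that] .
    fix x
    obtain w where w: "T w = w" "(\<lambda>n. (T ^^ n) x) \<longlonglongrightarrow> w" using orbit by blast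
    have "w = u" by (rule uniq[OF u w(1)])
    with w(2) show "(\<lambda>n. (T ^^ n) x) \<longlonglongrightarrow> u" by blast
  qed
qed

end
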